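(* Let $N_1,N_2\in\mathbb{N}$ and suppose $(|p_1\rangle,|q_1\rangle)\in\mathcal{S}_{N_1}$ and $(|p_2\rangle,|q_2\rangle)\in\mathcal{S}_{N_2}$ generate extremal rays. Then $(|p_1\rangle\otimes|p_2\rangle,|q_1\rangle\otimes|q_2\rangle)\in\mathcal{S}_{N_1+N_2}$ and it generates an extremal ray of $\mathcal{S}_{N_1+N_2}$.
   Context: $K=\frac12\begin{pmatrix}-1&1&1&1\\1&-1&1&1\\1&1&-1&1\\1&1&1&-1\end{pmatrix}$. For $N\in\mathbb{N}$, $\mathcal{S}_N=\{(|p\rangle,|q\rangle)\in(\mathbb{R}^4)^{\otimes N}\oplus(\mathbb{R}^4)^{\otimes N}: |p\rangle,|q\rangle\text{ entrywise nonnegative},\ K^{\otimes N}|p\rangle=|q\rangle\}$, a polyhedral cone (the cone of Pauli PPT spectra). *)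

theory Defs
  imports Complex_Main
begin

text \<open>Vectors in (R^4)^{\<otimes>N} are represented as functions on index strings
  (lists of length N over {0..3}), required to vanish off the index set.\<close>

definition idx :: "nat \<Rightarrow> nat list set" where
  "idx N = {xs. length xs = N \<and> set xs \<subseteq> {0..<4}}"

definition Kent :: "nat \<Rightarrow> nat \<Rightarrow> real" where
  "Kent i j = (if i = j then - 1/2 else 1/2)"

definition Kpow :: "nat \<Rightarrow> (nat list \<Rightarrow> real) \<Rightarrow> (nat list \<Rightarrow> real)" where
  "Kpow N p = (\<lambda>xs. if xs \<in> idx N
       then (\<Sum>ys\<in>idx N. (\<Prod>k<N. Kent (xs ! k) (ys ! k)) * p ys) else 0)"

definition is_vec :: "nat \<Rightarrow> (nat list \<Rightarrow> real) \<Rightarrow> bool" where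
  "is_vec N p \<longleftrightarrow> (\<forall>xs. xs \<notin> idx N \<longrightarrow> p xs = 0)"

definition S :: "nat \<Rightarrow> ((nat list \<Rightarrow> real) \<times> (nat list \<Rightarrow> real)) set" where
  "S N = {(p, q). is_vec N p \<and> is_vec N q \<and> (\<forall>xs. p xs \<ge> 0) \<and> (\<forall>xs. q xs \<ge> 0)
                  \<and> Kpow N p = q}"

definition tensor :: "nat \<Rightarrow> (nat list \<Rightarrow> real) \<Rightarrow> (nat list \<Rightarrow> real) \<Rightarrow> (nat list \<Rightarrow> real)" where
  "tensor N1 p1 p2 = (\<lambda>xs. p1 (take N1 xs) * p2 (drop N1 xs))"

definition extremal_ray ::
  "((nat list \<Rightarrow> real) \<times> (nat list \<Rightarrow> real)) set \<Rightarrow> (nat list \<Rightarrow> real) \<times> (nat list \<Rightarrow> real) \<Rightarrow> bool" where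
  "extremal_ray C x \<longleftrightarrow> x \<in> C \<and> x \<noteq> (\<lambda>_. 0, \<lambda>_. 0) \<and>
     (\<forall>y\<in>C. \<forall>z\<in>C.
        (fst x = (\<lambda>i. fst y i + fst z i) \<and> snd x = (\<lambda>i. snd y i + snd z i)) \<longrightarrow>
        (\<exists>a::real. a \<ge> 0 \<and> fst y = (\<lambda>i. a * fst x i) \<and> snd y = (\<lambda>i. a * snd x i)))"

end

theory Submission
  imports Defs
begin


definition Kmat :: "nat \<Rightarrow> nat list \<Rightarrow> nat list \<Rightarrow> real" where
  "Kmat N xs ys = (\<Prod>k<N. Kent (xs ! k) (ys ! k))"

lemma Kpow_Kmat: "Kpow N p = (\<lambda>xs. if xs \<in> idx N then (\<Sum>ys\<in>idx N. Kmat N xs ys * p ys) else 0)"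
  unfolding Kpow_def Kmat_def by (rule refl)

lemma finite_idx: "finite (idx N)"
proof -
  have "idx N = {xs. set xs \<subseteq> {0..<4} \<and> length xs = N}" by (auto simp: idx_def)
  then show ?thesis using finite_lists_length_eq[of "{0..<4::nat}" N] by simp
qed

lemma idx_append: "a \<in> idx m \<Longrightarrow> b \<in> idx n \<Longrightarrow> a @ b \<in> idx (m+n)"
  by (auto simp: idx_def)
lemma idx_take: "xs \<in> idx (m+n) \<Longrightarrow> take m xs \<in> idx m"
  by (auto simp: idx_def dest: in_set_takeD)
lemma idx_drop: "xs \<in> idx (m+n) \<Longrightarrow> drop m xs \<in> idx n"
  by (auto simp: idx_def dest: in_set_dropD)
lemma idx_len: "xs \<in> idx m \<Longrightarrow> length xs = m"
  by (auto simp: idx_def)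

lemma sum_idx_append:
  "(\<Sum>xs\<in>idx (m+n). f xs) = (\<Sum>a\<in>idx m. \<Sum>b\<in>idx n. f (a @ b))"
proof -
  have bij: "bij_betw (\<lambda>(a,b). a @ b) (idx m \<times> idx n) (idx (m+n))"
  proof (rule bij_betwI')
    fix x y assume xy: "x \<in> idx m \<times> idx n" "y \<in> idx m \<times> idx n"
    obtain a b where x: "x = (a,b)" by (cases x)
    obtain a' b' where y: "y = (a',b')" by (cases y)
    have "length a = length a'" using xy x y idx_len by auto
    then show "((\<lambda>(a,b). a @ b) x = (\<lambda>(a,b). a @ b) y) = (x = y)"
      using x y by (simp add: append_eq_append_conv)
  next
    fix x assume "x \<in> idx m \<times> idx n" then show "(\<lambda>(a,b). a @ b) x \<in> idx (m+n)"
      using idx_append by auto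
  next
    fix y assume y: "y \<in> idx (m+n)"
    show "\<exists>x\<in>idx m \<times> idx n. y = (\<lambda>(a,b). a @ b) x"
      using idx_take[OF y] idx_drop[OF y] by (intro bexI[of _ "(take m y, drop m y)"]) auto
  qed
  have "(\<Sum>xs\<in>idx (m+n). f xs) = (\<Sum>x\<in>idx m \<times> idx n. f ((\<lambda>(a,b). a @ b) x))"
    using sum.reindex_bij_betw[OF bij, of f] by simp
  also have "\<dots> = (\<Sum>a\<in>idx m. \<Sum>b\<in>idx n. f (a @ b))"
    by (simp add: sum.cartesian_product split_def)
  finally show ?thesis .
qed

lemma sum_idx_prod: fixes f :: "nat \<Rightarrow> nat \<Rightarrow> real" shows
  "(\<Sum>ys\<in>idx N. \<Prod>k<N. f k (ys ! k)) = (\<Prod>k<N. \<Sum>i<4. f k i)"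
proof (induction N arbitrary: f)
  case 0
  have "idx 0 = {[]}" by (auto simp: idx_def)
  then show ?case by simp
next
  case (Suc N)
  have bij: "bij_betw (\<lambda>(i,ys). i # ys) ({..<4} \<times> idx N) (idx (Suc N))"
  proof (rule bij_betwI')
    fix x y assume "x \<in> {..<4::nat} \<times> idx N" "y \<in> {..<4::nat} \<times> idx N"
    then show "((\<lambda>(i,ys). i # ys) x = (\<lambda>(i,ys). i # ys) y) = (x = y)"
      by (auto split: prod.splits)
  next
    fix x assume "x \<in> {..<4::nat} \<times> idx N" then show "(\<lambda>(i,ys). i # ys) x \<in> idx (Suc N)"
      by (auto simp: idx_def)
  next
    fix y assume y: "y \<in> idx (Suc N)"
    then obtain i ys where "y = i # ys" by (cases y) (auto simp: idx_def)
    with y show "\<exists>x\<in>{..<4} \<times> idx N. y = (\<lambda>(i,ys). i # ys) x"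
      by (intro bexI[of _ "(i, ys)"]) (auto simp: idx_def)
  qed
  have "(\<Sum>ys\<in>idx (Suc N). \<Prod>k<Suc N. f k (ys ! k))
      = (\<Sum>x\<in>{..<4} \<times> idx N. \<Prod>k<Suc N. f k (((\<lambda>(i,ys). i # ys) x) ! k))"
    using sum.reindex_bij_betw[OF bij, of "\<lambda>ys. \<Prod>k<Suc N. f k (ys ! k)"] by simp
  also have "\<dots> = (\<Sum>x\<in>{..<4} \<times> idx N. f 0 (fst x) * (\<Prod>k<N. f (Suc k) (snd x ! k)))"
    by (simp add: split_def prod.lessThan_Suc_shift del: prod.lessThan_Suc)
  also have "\<dots> = (\<Sum>i<4. \<Sum>ys\<in>idx N. f 0 i * (\<Prod>k<N. f (Suc k) (ys ! k)))"
    by (subst sum.cartesian_product) (simp add: split_def)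
  also have "\<dots> = (\<Sum>i<4. f 0 i * (\<Prod>k<N. \<Sum>j<4. f (Suc k) j))"
  proof (rule sum.cong[OF refl])
    fix i :: nat
    show "(\<Sum>ys\<in>idx N. f 0 i * (\<Prod>k<N. f (Suc k) (ys ! k))) = f 0 i * (\<Prod>k<N. \<Sum>j<4. f (Suc k) j)"
      using Suc.IH[of "\<lambda>k. f (Suc k)"] by (subst sum_distrib_left[symmetric]) simp
  qed
  also have "\<dots> = (\<Prod>k<Suc N. \<Sum>i<4. f k i)"
    by (simp add: prod.lessThan_Suc_shift sum_distrib_right del: prod.lessThan_Suc)
  finally show ?case .
qed

lemma prod_lessThan_add: fixes m n :: nat and g :: "nat \<Rightarrow> real" shows "(\<Prod>k<m+n. g k) = (\<Prod>k<m. g k) * (\<Prod>k<n. g (m+k))"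
  by (induction n) (simp_all add: mult_ac)

lemma Kmat_append: "length a = m \<Longrightarrow> length c = m \<Longrightarrow>
   Kmat (m+n) (a@b) (c@d) = Kmat m a c * Kmat n b d"
  by (simp add: Kmat_def prod_lessThan_add nth_append)

lemma Kpow_out: "xs \<notin> idx N \<Longrightarrow> Kpow N p xs = 0"
  by (simp add: Kpow_def)

lemma is_vec_Kpow: "is_vec N (Kpow N p)"
  by (simp add: is_vec_def Kpow_out)

lemma Kpow_lin: "Kpow N (\<lambda>xs. a * f xs + b * g xs) = (\<lambda>xs. a * Kpow N f xs + b * Kpow N g xs)"
  by (rule ext) (simp add: Kpow_def sum.distrib sum_distrib_left algebra_simps)

lemma Kpow_scale: "Kpow N (\<lambda>xs. c * f xs) = (\<lambda>xs. c * Kpow N f xs)"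
  by (rule ext) (simp add: Kpow_def sum_distrib_left algebra_simps)

lemma Kpow_vanish: "(\<And>xs. xs \<in> idx N \<Longrightarrow> f xs = 0) \<Longrightarrow> Kpow N f = (\<lambda>_. 0)"
  by (rule ext) (simp add: Kpow_def)

lemma Kpow_split: "a \<in> idx m \<Longrightarrow> b \<in> idx n \<Longrightarrow>
  Kpow (m+n) x (a@b) = (\<Sum>c\<in>idx m. Kmat m a c * (\<Sum>d\<in>idx n. Kmat n b d * x (c@d)))"
  by (simp add: Kpow_Kmat idx_append sum_idx_append Kmat_append idx_len sum_distrib_left mult_ac)

lemma idx_nth: "xs \<in> idx N \<Longrightarrow> k < N \<Longrightarrow> xs ! k < 4"
  unfolding idx_def using nth_mem by fastforce

lemma Kent_sq: "a < 4 \<Longrightarrow> b < 4 \<Longrightarrow> (\<Sum>i<4. Kent a i * Kent i b) = (if a = b then 1 else 0)"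
proof -
  assume "a < 4" "b < 4"
  then have a: "a = 0 \<or> a = 1 \<or> a = 2 \<or> a = 3" and b: "b = 0 \<or> b = 1 \<or> b = 2 \<or> b = 3" by auto
  have e: "(\<Sum>i<4. Kent a i * Kent i b) = Kent a 0 * Kent 0 b + Kent a 1 * Kent 1 b + Kent a 2 * Kent 2 b + Kent a 3 * Kent 3 b"
    by (simp add: numeral_eq_Suc)
  show ?thesis unfolding e using a b by (elim disjE) (simp_all add: Kent_def)
qed

lemma Kmat_sq: "xs \<in> idx N \<Longrightarrow> zs \<in> idx N \<Longrightarrow>
  (\<Sum>ys\<in>idx N. Kmat N xs ys * Kmat N ys zs) = (if xs = zs then 1 else 0)"
proof -
  assume xs: "xs \<in> idx N" and zs: "zs \<in> idx N"
  have "(\<Sum>ys\<in>idx N. Kmat N xs ys * Kmat N ys zs)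
     = (\<Sum>ys\<in>idx N. \<Prod>k<N. Kent (xs!k) (ys!k) * Kent (ys!k) (zs!k))"
    by (simp add: Kmat_def prod.distrib)
  also have "\<dots> = (\<Prod>k<N. \<Sum>i<4. Kent (xs!k) i * Kent i (zs!k))"
    by (rule sum_idx_prod)
  also have "\<dots> = (\<Prod>k<N. if xs!k = zs!k then 1 else 0)"
    using xs zs by (intro prod.cong refl Kent_sq) (auto simp: idx_nth)
  also have "\<dots> = (if xs = zs then 1 else 0)"
  proof (cases "xs = zs")
    case True then show ?thesis by simp
  next
    case False
    then obtain k where "k < N" "xs!k \<noteq> zs!k"
      using xs zs nth_equalityI[of xs zs] by (auto simp: idx_def)
    then show ?thesis using False by (auto simp: prod_zero_iff)
  qed
  finally show ?thesis .
qed

lemma Kpow_invol: "is_vec N p \<Longrightarrow> Kpow N (Kpow N p) = p"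
proof (rule ext)
  fix xs assume pv: "is_vec N p"
  show "Kpow N (Kpow N p) xs = p xs"
  proof (cases "xs \<in> idx N")
    case False then show ?thesis using pv by (simp add: Kpow_out is_vec_def)
  next
    case True
    have "Kpow N (Kpow N p) xs = (\<Sum>ys\<in>idx N. Kmat N xs ys * (\<Sum>zs\<in>idx N. Kmat N ys zs * p zs))"
      using True by (simp add: Kpow_Kmat)
    also have "\<dots> = (\<Sum>zs\<in>idx N. (\<Sum>ys\<in>idx N. Kmat N xs ys * Kmat N ys zs) * p zs)"
      by (simp only: sum_distrib_left sum_distrib_right mult.assoc, rule sum.swap)
    also have "\<dots> = (\<Sum>zs\<in>idx N. (if xs = zs then p zs else 0))"
      using True by (intro sum.cong refl) (simp add: Kmat_sq)
    also have "\<dots> = p xs" using True finite_idx by simp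
    finally show ?thesis .
  qed
qed




lemma eps_exists:
  fixes f g :: "'a \<Rightarrow> real"
  assumes "finite A" "\<forall>i\<in>A. f i \<ge> 0 \<and> (f i = 0 \<longrightarrow> g i = 0)"
  shows "\<exists>e>0. \<forall>i\<in>A. e * \<bar>g i\<bar> \<le> f i"
  using assms
proof (induction A rule: finite_induct)
  case empty then show ?case by (intro exI[of _ 1]) simp
next
  case (insert j A)
  then obtain e where e: "e > 0" "\<forall>i\<in>A. e * \<bar>g i\<bar> \<le> f i" by auto
  show ?case
  proof (cases "g j = 0")
    case True then show ?thesis using e insert.prems by (intro exI[of _ e]) auto
  next
    case False
    then have fj: "f j > 0" using insert.prems by force
    define e' where "e' = min e (f j / \<bar>g j\<bar>)"
    have e'pos: "e' > 0" using e fj False by (simp add: e'_def)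
    have "e' * \<bar>g j\<bar> \<le> f j / \<bar>g j\<bar> * \<bar>g j\<bar>"
      by (intro mult_right_mono) (auto simp: e'_def)
    also have "\<dots> = f j" using False by simp
    finally have 1: "e' * \<bar>g j\<bar> \<le> f j" .
    have 2: "e' * \<bar>g i\<bar> \<le> f i" if "i \<in> A" for i
    proof -
      have "e' * \<bar>g i\<bar> \<le> e * \<bar>g i\<bar>" by (intro mult_right_mono) (auto simp: e'_def)
      then show ?thesis using e that by force
    qed
    show ?thesis using 1 2 e'pos by (intro exI[of _ e']) auto
  qed
qed

lemma extremal_facts:
  assumes "extremal_ray (S N) (p, q)"
  shows "is_vec N p" "is_vec N q" "\<forall>xs. p xs \<ge> 0" "\<forall>xs. q xs \<ge> 0" "Kpow N p = q"
  using assms by (auto simp: extremal_ray_def S_def)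

lemma extremal_nonzero:
  assumes ext: "extremal_ray (S N) (p, q)"
  shows "\<exists>xs\<in>idx N. p xs \<noteq> 0" "\<exists>xs\<in>idx N. q xs \<noteq> 0"
proof -
  note f = extremal_facts[OF ext]
  have nz: "(p, q) \<noteq> (\<lambda>_. 0, \<lambda>_. 0)" using ext by (simp add: extremal_ray_def)
  have p0: "p \<noteq> (\<lambda>_. 0)"
  proof
    assume "p = (\<lambda>_. 0)"
    then have "q = (\<lambda>_. 0)" using f(5) Kpow_vanish[of N p] by simp
    with \<open>p = _\<close> nz show False by simp
  qed
  have q0: "q \<noteq> (\<lambda>_. 0)"
  proof
    assume "q = (\<lambda>_. 0)"
    then have "p = (\<lambda>_. 0)" using Kpow_invol[OF f(1)] f(5) Kpow_vanish[of N q] by simp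
    with p0 show False by simp
  qed
  from p0 obtain xs where "p xs \<noteq> 0" by auto
  then show "\<exists>xs\<in>idx N. p xs \<noteq> 0" using f(1) by (auto simp: is_vec_def)
  from q0 obtain ys where "q ys \<noteq> 0" by auto
  then show "\<exists>xs\<in>idx N. q xs \<noteq> 0" using f(2) by (auto simp: is_vec_def)
qed

lemma extremal_dec:
  assumes e: "extremal_ray C (p, q)"
  shows "\<And>y z. y \<in> C \<Longrightarrow> z \<in> C \<Longrightarrow> p = (\<lambda>i. fst y i + fst z i) \<Longrightarrow> q = (\<lambda>i. snd y i + snd z i) \<Longrightarrow>
     \<exists>a::real. a \<ge> 0 \<and> fst y = (\<lambda>i. a * p i) \<and> snd y = (\<lambda>i. a * q i)"
proof -
  fix y z assume yz: "y \<in> C" "z \<in> C" "p = (\<lambda>i. fst y i + fst z i)" "q = (\<lambda>i. snd y i + snd z i)"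
  have h: "\<forall>y\<in>C. \<forall>z\<in>C.
        (fst (p,q) = (\<lambda>i. fst y i + fst z i) \<and> snd (p,q) = (\<lambda>i. snd y i + snd z i)) \<longrightarrow>
        (\<exists>a::real. a \<ge> 0 \<and> fst y = (\<lambda>i. a * fst (p,q) i) \<and> snd y = (\<lambda>i. a * snd (p,q) i))"
    using e unfolding extremal_ray_def by (elim conjE)
  have "(fst (p,q) = (\<lambda>i. fst y i + fst z i) \<and> snd (p,q) = (\<lambda>i. snd y i + snd z i)) \<longrightarrow>
        (\<exists>a::real. a \<ge> 0 \<and> fst y = (\<lambda>i. a * fst (p,q) i) \<and> snd y = (\<lambda>i. a * snd (p,q) i))"
    using bspec[OF bspec[OF h yz(1)] yz(2)] .
  then show "\<exists>a::real. a \<ge> 0 \<and> fst y = (\<lambda>i. a * p i) \<and> snd y = (\<lambda>i. a * q i)"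
    using yz(3,4) by simp
qed

lemma extremal_support:
  assumes ext: "extremal_ray (S N) (p, q)" and xv: "is_vec N x"
    and zp: "\<forall>xs. p xs = 0 \<longrightarrow> x xs = 0"
    and zq: "\<forall>xs. q xs = 0 \<longrightarrow> Kpow N x xs = 0"
  shows "\<exists>c. \<forall>xs. x xs = c * p xs"
proof -
  note f = extremal_facts[OF ext]
  obtain e1 where e1: "e1 > 0" "\<forall>xs\<in>idx N. e1 * \<bar>x xs\<bar> \<le> p xs"
    using eps_exists[OF finite_idx[of N], of p x] f(3) zp by auto
  obtain e2 where e2: "e2 > 0" "\<forall>xs\<in>idx N. e2 * \<bar>Kpow N x xs\<bar> \<le> q xs"
    using eps_exists[OF finite_idx[of N], of q "Kpow N x"] f(4) zq by auto
  define e where "e = min e1 e2"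
  have epos: "e > 0" using e1 e2 by (simp add: e_def)
  have b1: "\<bar>e * x xs\<bar> \<le> p xs" for xs
  proof (cases "xs \<in> idx N")
    case True
    have "\<bar>e * x xs\<bar> = e * \<bar>x xs\<bar>" using epos by (simp add: abs_mult)
    also have "\<dots> \<le> e1 * \<bar>x xs\<bar>" by (intro mult_right_mono) (auto simp: e_def)
    finally show ?thesis using e1 True by force
  next
    case False then show ?thesis using xv f(3) by (simp add: is_vec_def)
  qed
  have b2: "\<bar>e * Kpow N x xs\<bar> \<le> q xs" for xs
  proof (cases "xs \<in> idx N")
    case True
    have "\<bar>e * Kpow N x xs\<bar> = e * \<bar>Kpow N x xs\<bar>" using epos by (simp add: abs_mult)
    also have "\<dots> \<le> e2 * \<bar>Kpow N x xs\<bar>" by (intro mult_right_mono) (auto simp: e_def)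
    finally show ?thesis using e2 True by force
  next
    case False then show ?thesis using f(4) by (simp add: Kpow_out)
  qed
  define y1 where "y1 = (\<lambda>xs. (1/2) * p xs + (e/2) * x xs)"
  define z1 where "z1 = (\<lambda>xs. (1/2) * p xs + (-e/2) * x xs)"
  define y2 where "y2 = (\<lambda>xs. (1/2) * q xs + (e/2) * Kpow N x xs)"
  define z2 where "z2 = (\<lambda>xs. (1/2) * q xs + (-e/2) * Kpow N x xs)"
  have "(y1, y2) \<in> S N"
  proof -
    have "y1 xs \<ge> 0" for xs using b1[of xs] by (simp add: y1_def abs_le_iff)
    moreover have "y2 xs \<ge> 0" for xs using b2[of xs] by (simp add: y2_def abs_le_iff)
    moreover have "is_vec N y1" using f(1) xv by (simp add: is_vec_def y1_def)
    moreover have "is_vec N y2" using f(2) by (simp add: is_vec_def y2_def Kpow_out)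
    moreover have "Kpow N y1 = y2" unfolding y1_def y2_def Kpow_lin f(5) ..
    ultimately show ?thesis by (simp add: S_def)
  qed
  moreover have "(z1, z2) \<in> S N"
  proof -
    have "z1 xs \<ge> 0" for xs using b1[of xs] by (simp add: z1_def abs_le_iff)
    moreover have "z2 xs \<ge> 0" for xs using b2[of xs] by (simp add: z2_def abs_le_iff)
    moreover have "is_vec N z1" using f(1) xv by (simp add: is_vec_def z1_def)
    moreover have "is_vec N z2" using f(2) by (simp add: is_vec_def z2_def Kpow_out)
    moreover have "Kpow N z1 = z2" unfolding z1_def z2_def Kpow_lin f(5) ..
    ultimately show ?thesis by (simp add: S_def)
  qed
  moreover have "p = (\<lambda>i. fst (y1,y2) i + fst (z1,z2) i)"
    by (rule HOL.ext) (simp add: y1_def z1_def algebra_simps)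
  moreover have "q = (\<lambda>i. snd (y1,y2) i + snd (z1,z2) i)"
    by (rule HOL.ext) (simp add: y2_def z2_def algebra_simps)
  ultimately have "\<exists>a::real. a \<ge> 0 \<and> fst (y1,y2) = (\<lambda>i. a * p i) \<and> snd (y1,y2) = (\<lambda>i. a * q i)"
    by (rule extremal_dec[OF ext])
  then obtain a where a: "y1 = (\<lambda>i. a * p i)" by auto
  show ?thesis
  proof (intro exI allI)
    fix xs
    have "(1/2) * p xs + (e/2) * x xs = a * p xs" using fun_cong[OF a, of xs] by (simp add: y1_def)
    then show "x xs = ((2*a - 1)/e) * p xs" using epos by (simp add: field_simps)
  qed
qed




definition sec :: "nat \<Rightarrow> (nat list \<Rightarrow> real) \<Rightarrow> nat list \<Rightarrow> nat list \<Rightarrow> real" where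
  "sec n x c = (\<lambda>d. if d \<in> idx n then x (c @ d) else 0)"

lemma tensor_app: "length a = m \<Longrightarrow> tensor m p1 p2 (a @ b) = p1 a * p2 b"
  by (simp add: tensor_def)

lemma idx_split: "xs \<in> idx (m+n) \<Longrightarrow> \<exists>a b. a \<in> idx m \<and> b \<in> idx n \<and> xs = a @ b"
  using idx_take idx_drop by (metis append_take_drop_id)

lemma is_vec_tensor: "is_vec m p1 \<Longrightarrow> is_vec n p2 \<Longrightarrow> is_vec (m+n) (tensor m p1 p2)"
  unfolding is_vec_def tensor_def
proof (intro allI impI)
  fix xs assume h1: "\<forall>xs. xs \<notin> idx m \<longrightarrow> p1 xs = 0" and h2: "\<forall>xs. xs \<notin> idx n \<longrightarrow> p2 xs = 0"
    and xs: "xs \<notin> idx (m+n)"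
  have "take m xs \<notin> idx m \<or> drop m xs \<notin> idx n"
  proof (rule ccontr)
    assume "\<not> ?thesis"
    then have "take m xs @ drop m xs \<in> idx (m+n)" using idx_append by blast
    with xs show False by simp
  qed
  then show "p1 (take m xs) * p2 (drop m xs) = 0" using h1 h2 by auto
qed

lemma Kpow_tensor: "is_vec m p1 \<Longrightarrow> is_vec n p2 \<Longrightarrow>
   Kpow (m+n) (tensor m p1 p2) = tensor m (Kpow m p1) (Kpow n p2)"
proof (rule HOL.ext)
  fix xs
  show "Kpow (m+n) (tensor m p1 p2) xs = tensor m (Kpow m p1) (Kpow n p2) xs"
  proof (cases "xs \<in> idx (m+n)")
    case False
    then show ?thesis using is_vec_tensor[OF is_vec_Kpow[of m p1] is_vec_Kpow[of n p2]]
      by (simp add: Kpow_out is_vec_def)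
  next
    case True
    then obtain a b where ab: "a \<in> idx m" "b \<in> idx n" "xs = a @ b" using idx_split by blast
    have "Kpow (m+n) (tensor m p1 p2) xs
        = (\<Sum>c\<in>idx m. Kmat m a c * (\<Sum>d\<in>idx n. Kmat n b d * tensor m p1 p2 (c @ d)))"
      using ab by (simp add: Kpow_split)
    also have "\<dots> = (\<Sum>c\<in>idx m. Kmat m a c * (\<Sum>d\<in>idx n. Kmat n b d * (p1 c * p2 d)))"
      by (rule sum.cong[OF refl]) (simp add: tensor_app idx_len)
    also have "\<dots> = (\<Sum>c\<in>idx m. Kmat m a c * p1 c) * (\<Sum>d\<in>idx n. Kmat n b d * p2 d)"
      unfolding sum_product by (simp add: sum_distrib_left mult_ac)
    also have "\<dots> = tensor m (Kpow m p1) (Kpow n p2) xs"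
      using ab by (simp add: tensor_app idx_len Kpow_Kmat)
    finally show ?thesis .
  qed
qed

lemma Kpow_sec: "b \<in> idx n \<Longrightarrow> Kpow n (sec n x c) b = (\<Sum>d\<in>idx n. Kmat n b d * x (c @ d))"
  unfolding Kpow_Kmat sec_def by (auto intro!: sum.cong)

lemma tensor_support:
  assumes e1: "extremal_ray (S m) (p1, q1)" and e2: "extremal_ray (S n) (p2, q2)"
    and xv: "is_vec (m+n) x"
    and zp: "\<forall>xs. tensor m p1 p2 xs = 0 \<longrightarrow> x xs = 0"
    and zq: "\<forall>xs. tensor m q1 q2 xs = 0 \<longrightarrow> Kpow (m+n) x xs = 0"
  shows "\<exists>c. \<forall>xs. x xs = c * tensor m p1 p2 xs"
proof -
  note f1 = extremal_facts[OF e1] and f2 = extremal_facts[OF e2]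
  define g where "g = (\<lambda>b c. if c \<in> idx m then Kpow n (sec n x c) b else 0)"
  have F: "Kpow (m+n) x (a@b) = Kpow m (g b) a" if "a \<in> idx m" "b \<in> idx n" for a b
  proof -
    have "Kpow (m+n) x (a@b) = (\<Sum>c\<in>idx m. Kmat m a c * (\<Sum>d\<in>idx n. Kmat n b d * x (c@d)))"
      using that by (rule Kpow_split)
    also have "\<dots> = (\<Sum>c\<in>idx m. Kmat m a c * g b c)"
      using that(2) by (intro sum.cong refl) (simp add: g_def Kpow_sec)
    also have "\<dots> = Kpow m (g b) a" using that(1) by (simp add: Kpow_Kmat)
    finally show ?thesis .
  qed
  have gv: "\<forall>b\<in>idx n. \<exists>v. \<forall>c. g b c = v * p1 c"
  proof
    fix b assume b: "b \<in> idx n"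
    show "\<exists>v. \<forall>c. g b c = v * p1 c"
    proof (rule extremal_support[OF e1])
      show "is_vec m (g b)" by (simp add: is_vec_def g_def)
      show "\<forall>c. p1 c = 0 \<longrightarrow> g b c = 0"
      proof (intro allI impI)
        fix c assume p1c: "p1 c = 0"
        show "g b c = 0"
        proof (cases "c \<in> idx m")
          case True
          have "Kpow n (sec n x c) = (\<lambda>_. 0)"
          proof (rule Kpow_vanish)
            fix d assume d: "d \<in> idx n"
            have "tensor m p1 p2 (c@d) = 0" using True p1c by (simp add: tensor_app idx_len)
            then show "sec n x c d = 0" using zp d by (simp add: sec_def)
          qed
          then show ?thesis by (simp add: g_def)
        qed (simp add: g_def)
      qed
      show "\<forall>a. q1 a = 0 \<longrightarrow> Kpow m (g b) a = 0"
      proof (intro allI impI)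
        fix a assume q1a: "q1 a = 0"
        show "Kpow m (g b) a = 0"
        proof (cases "a \<in> idx m")
          case True
          have "tensor m q1 q2 (a@b) = 0" using True q1a by (simp add: tensor_app idx_len)
          then show ?thesis using zq F[OF True b] by simp
        qed (simp add: Kpow_out)
      qed
    qed
  qed
  then obtain v where v: "\<forall>b\<in>idx n. \<forall>c. g b c = v b * p1 c" by metis
  obtain a0 where a0: "a0 \<in> idx m" "q1 a0 \<noteq> 0" using extremal_nonzero(2)[OF e1] by blast
  obtain c0 where c0: "c0 \<in> idx m" "p1 c0 \<noteq> 0" using extremal_nonzero(1)[OF e1] by blast
  have Kg: "Kpow m (g b) = (\<lambda>a. v b * q1 a)" if "b \<in> idx n" for b
  proof -
    have "g b = (\<lambda>c. v b * p1 c)" using v that by auto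
    then show ?thesis using Kpow_scale[of m "v b" p1] f1(5) by simp
  qed
  have vz: "v b = 0" if "b \<in> idx n" "q2 b = 0" for b
  proof -
    have "tensor m q1 q2 (a0@b) = 0" using that a0 by (simp add: tensor_app idx_len)
    then have "Kpow (m+n) x (a0@b) = 0" using zq by simp
    then have "v b * q1 a0 = 0" using F[OF a0(1) that(1)] Kg[OF that(1)] by simp
    then show ?thesis using a0 by simp
  qed
  have "\<exists>d. \<forall>b. sec n x c0 b = d * p2 b"
  proof (rule extremal_support[OF e2])
    show "is_vec n (sec n x c0)" by (simp add: is_vec_def sec_def)
    show "\<forall>b. p2 b = 0 \<longrightarrow> sec n x c0 b = 0"
    proof (intro allI impI)
      fix b assume p2b: "p2 b = 0"
      show "sec n x c0 b = 0"
      proof (cases "b \<in> idx n")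
        case True
        have "tensor m p1 p2 (c0@b) = 0" using c0 p2b by (simp add: tensor_app idx_len)
        then show ?thesis using zp True by (simp add: sec_def)
      qed (simp add: sec_def)
    qed
    show "\<forall>b. q2 b = 0 \<longrightarrow> Kpow n (sec n x c0) b = 0"
    proof (intro allI impI)
      fix b assume q2b: "q2 b = 0"
      show "Kpow n (sec n x c0) b = 0"
      proof (cases "b \<in> idx n")
        case True
        have "Kpow n (sec n x c0) b = g b c0" using c0 by (simp add: g_def)
        also have "\<dots> = v b * p1 c0" using v True by simp
        finally show ?thesis using vz[OF True q2b] by simp
      qed (simp add: Kpow_out)
    qed
  qed
  then obtain d where d: "\<forall>b. sec n x c0 b = d * p2 b" by blast
  define e where "e = d / p1 c0"
  have vq: "v b = e * q2 b" if "b \<in> idx n" for b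
  proof -
    have "sec n x c0 = (\<lambda>b. d * p2 b)" using d by auto
    then have 1: "Kpow n (sec n x c0) b = d * q2 b" using Kpow_scale[of n d p2] f2(5) by simp
    have "Kpow n (sec n x c0) b = g b c0" using c0 by (simp add: g_def)
    also have "\<dots> = v b * p1 c0" using v that by simp
    finally have "v b * p1 c0 = d * q2 b" using 1 by simp
    then show ?thesis using c0 by (simp add: e_def field_simps)
  qed
  have main: "x (c@b) = e * (p1 c * p2 b)" if c: "c \<in> idx m" and b: "b \<in> idx n" for c b
  proof -
    have "Kpow n (sec n x c) = Kpow n (\<lambda>b. (e * p1 c) * p2 b)"
    proof (rule HOL.ext)
      fix b'
      show "Kpow n (sec n x c) b' = Kpow n (\<lambda>b. (e * p1 c) * p2 b) b'"
      proof (cases "b' \<in> idx n")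
        case True
        have "Kpow n (sec n x c) b' = g b' c" using c by (simp add: g_def)
        also have "\<dots> = v b' * p1 c" using v True by simp
        also have "\<dots> = (e * p1 c) * q2 b'" using vq[OF True] by simp
        also have "\<dots> = Kpow n (\<lambda>b. (e * p1 c) * p2 b) b'"
          using Kpow_scale[of n "e * p1 c" p2] f2(5) by simp
        finally show ?thesis .
      qed (simp add: Kpow_out)
    qed
    then have "Kpow n (Kpow n (sec n x c)) = Kpow n (Kpow n (\<lambda>b. (e * p1 c) * p2 b))" by simp
    moreover have "is_vec n (sec n x c)" by (simp add: is_vec_def sec_def)
    moreover have "is_vec n (\<lambda>b. (e * p1 c) * p2 b)" using f2(1) by (simp add: is_vec_def)
    ultimately have "sec n x c = (\<lambda>b. (e * p1 c) * p2 b)" by (simp add: Kpow_invol)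
    then have "sec n x c b = e * p1 c * p2 b" by simp
    then show ?thesis using b by (simp add: sec_def)
  qed
  show ?thesis
  proof (intro exI allI)
    fix xs
    show "x xs = e * tensor m p1 p2 xs"
    proof (cases "xs \<in> idx (m+n)")
      case True
      then obtain a b where "a \<in> idx m" "b \<in> idx n" "xs = a @ b" using idx_split by blast
      then show ?thesis using main by (simp add: tensor_app idx_len)
    next
      case False
      then show ?thesis using xv is_vec_tensor[OF f1(1) f2(1)] by (simp add: is_vec_def)
    qed
  qed
qed




theorem mainTheorem7:
  fixes N1 N2 :: nat and p1 q1 p2 q2 :: "nat list \<Rightarrow> real"
  assumes "extremal_ray (S N1) (p1, q1)"
      and "extremal_ray (S N2) (p2, q2)"
  shows "(tensor N1 p1 p2, tensor N1 q1 q2) \<in> S (N1 + N2)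
       \<and> extremal_ray (S (N1 + N2)) (tensor N1 p1 p2, tensor N1 q1 q2)"
proof -
  note f1 = extremal_facts[OF assms(1)] and f2 = extremal_facts[OF assms(2)]
  have Pnn: "\<forall>xs. tensor N1 p1 p2 xs \<ge> 0" using f1(3) f2(3) by (simp add: tensor_def)
  have Qnn: "\<forall>xs. tensor N1 q1 q2 xs \<ge> 0" using f1(4) f2(4) by (simp add: tensor_def)
  have KP: "Kpow (N1+N2) (tensor N1 p1 p2) = tensor N1 q1 q2"
    using Kpow_tensor[OF f1(1) f2(1)] f1(5) f2(5) by simp
  have mem: "(tensor N1 p1 p2, tensor N1 q1 q2) \<in> S (N1 + N2)"
    unfolding S_def using is_vec_tensor[OF f1(1) f2(1)] is_vec_tensor[OF f1(2) f2(2)] Pnn Qnn KP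
    by simp
  obtain a where a: "a \<in> idx N1" "p1 a \<noteq> 0" using extremal_nonzero(1)[OF assms(1)] by blast
  obtain b where b: "b \<in> idx N2" "p2 b \<noteq> 0" using extremal_nonzero(1)[OF assms(2)] by blast
  have Ppos: "tensor N1 p1 p2 (a @ b) > 0"
  proof -
    have "p1 a > 0" "p2 b > 0" using a b f1(3) f2(3) by (auto simp: order_less_le)
    then show ?thesis using a by (simp add: tensor_app idx_len)
  qed
  have nz: "(tensor N1 p1 p2, tensor N1 q1 q2) \<noteq> (\<lambda>_. 0, \<lambda>_. 0)"
  proof
    assume "(tensor N1 p1 p2, tensor N1 q1 q2) = (\<lambda>_. 0, \<lambda>_. 0)"
    then have "tensor N1 p1 p2 (a @ b) = 0" by simp
    with Ppos show False by simp
  qed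
  have dec: "\<forall>y\<in>S (N1 + N2). \<forall>z\<in>S (N1 + N2).
        (fst (tensor N1 p1 p2, tensor N1 q1 q2) = (\<lambda>i. fst y i + fst z i) \<and>
         snd (tensor N1 p1 p2, tensor N1 q1 q2) = (\<lambda>i. snd y i + snd z i)) \<longrightarrow>
        (\<exists>a::real. a \<ge> 0 \<and> fst y = (\<lambda>i. a * fst (tensor N1 p1 p2, tensor N1 q1 q2) i)
                  \<and> snd y = (\<lambda>i. a * snd (tensor N1 p1 p2, tensor N1 q1 q2) i))"
  proof (intro ballI impI)
    fix y z assume y: "y \<in> S (N1 + N2)" and z: "z \<in> S (N1 + N2)"
      and sums: "fst (tensor N1 p1 p2, tensor N1 q1 q2) = (\<lambda>i. fst y i + fst z i) \<and>
         snd (tensor N1 p1 p2, tensor N1 q1 q2) = (\<lambda>i. snd y i + snd z i)"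
    obtain y1 y2 where yy: "y = (y1, y2)" by (cases y)
    obtain z1 z2 where zz: "z = (z1, z2)" by (cases z)
    have yv: "is_vec (N1+N2) y1" and y1n: "\<forall>xs. y1 xs \<ge> 0" and y2n: "\<forall>xs. y2 xs \<ge> 0"
      and Ky: "Kpow (N1+N2) y1 = y2"
      using y yy by (auto simp: S_def)
    have z1n: "\<forall>xs. z1 xs \<ge> 0" and z2n: "\<forall>xs. z2 xs \<ge> 0"
      using z zz by (auto simp: S_def)
    have s1: "tensor N1 p1 p2 xs = y1 xs + z1 xs" for xs
      using sums yy zz by (simp add: fun_eq_iff)
    have s2: "tensor N1 q1 q2 xs = y2 xs + z2 xs" for xs
      using sums yy zz by (simp add: fun_eq_iff)
    have "\<exists>c. \<forall>xs. y1 xs = c * tensor N1 p1 p2 xs"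
    proof (rule tensor_support[OF assms(1) assms(2) yv])
      show "\<forall>xs. tensor N1 p1 p2 xs = 0 \<longrightarrow> y1 xs = 0"
      proof (intro allI impI)
        fix xs assume "tensor N1 p1 p2 xs = 0"
        then show "y1 xs = 0" using s1[of xs] y1n z1n by (metis add_nonneg_eq_0_iff)
      qed
      show "\<forall>xs. tensor N1 q1 q2 xs = 0 \<longrightarrow> Kpow (N1 + N2) y1 xs = 0"
      proof (intro allI impI)
        fix xs assume "tensor N1 q1 q2 xs = 0"
        then show "Kpow (N1 + N2) y1 xs = 0" using s2[of xs] y2n z2n Ky by (metis add_nonneg_eq_0_iff)
      qed
    qed
    then obtain c where c: "\<forall>xs. y1 xs = c * tensor N1 p1 p2 xs" by blast
    have y1c: "y1 = (\<lambda>i. c * tensor N1 p1 p2 i)" using c by auto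
    have y2c: "y2 = (\<lambda>i. c * tensor N1 q1 q2 i)"
      using Ky y1c Kpow_scale[of "N1+N2" c "tensor N1 p1 p2"] KP by simp
    have "c \<ge> 0"
    proof -
      have "0 \<le> y1 (a @ b)" using y1n by simp
      then have "0 \<le> c * tensor N1 p1 p2 (a @ b)" using c by simp
      then show ?thesis using Ppos by (simp add: zero_le_mult_iff)
    qed
    then show "\<exists>a::real. a \<ge> 0 \<and> fst y = (\<lambda>i. a * fst (tensor N1 p1 p2, tensor N1 q1 q2) i)
                  \<and> snd y = (\<lambda>i. a * snd (tensor N1 p1 p2, tensor N1 q1 q2) i)"
      using yy y1c y2c by (intro exI[of _ c]) simp
  qed
  have "extremal_ray (S (N1 + N2)) (tensor N1 p1 p2, tensor N1 q1 q2)"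
    unfolding extremal_ray_def by (rule conjI[OF mem conjI[OF nz dec]])
  with mem show ?thesis by (rule conjI)
qed


end
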